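(* Let $n\ge2$ and let $v_1,\dots,v_k$ and $u_1,\dots,u_k$ be two collections of $k\le n-1$ normalized vectors in $\mathbb C^n$, and let $\mathcal V:=\{X\in M_n(\mathbb C):\ v_1^\ast Xu_1=\dots=v_k^\ast Xu_k=0\}$. If $A\in\mathcal V$ has $\mathrm{rk}\,A>k$, then $A$ is not left-symmetric relative to $\mathcal V$. In particular, $\mathcal V$ contains no invertible matrix that is left-symmetric relative to $\mathcal V$.
   Context: $M_n(\mathbb C)$ carries the operator (spectral) norm. $A\perp B$ (Birkhoff–James orthogonality) means $\|A+\lambda B\|\ge\|A\|$ for all $\lambda\in\mathbb C$. For a subset $\mathcal S$, an element $A\in\mathcal S$ is left-symmetric relative to $\mathcal S$ if for every $B\in\mathcal S$, $A\perp B$ implies $B\perp A$. *)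

theory Defs
  imports "HOL-Analysis.Analysis"
begin

definition opnorm :: "complex^'n^'n \<Rightarrow> real" where
  "opnorm A = onorm (\<lambda>x. A *v x)"

definition bj_orth :: "complex^'n^'n \<Rightarrow> complex^'n^'n \<Rightarrow> bool" where
  "bj_orth A B \<longleftrightarrow> (\<forall>c::complex. opnorm (\<chi> i j. A $ i $ j + c * B $ i $ j) \<ge> opnorm A)"

definition left_symmetric_rel :: "(complex^'n^'n) set \<Rightarrow> complex^'n^'n \<Rightarrow> bool" where
  "left_symmetric_rel S A \<longleftrightarrow> A \<in> S \<and> (\<forall>B\<in>S. bj_orth A B \<longrightarrow> bj_orth B A)"

definition sesq :: "complex^'n \<Rightarrow> complex^'n^'n \<Rightarrow> complex^'n \<Rightarrow> complex" where
  "sesq v X u = (\<Sum>i\<in>UNIV. cnj (v $ i) * ((X *v u) $ i))"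

end

theory Submission
  imports Defs
begin

definition herm :: "complex^'n \<Rightarrow> complex^'n \<Rightarrow> complex" where
  "herm x y = (\<Sum>i\<in>UNIV. cnj (x$i) * y$i)"

lemma herm_add_right: "herm x (y + z) = herm x y + herm x z"
  by (simp add: herm_def distrib_left sum.distrib)
lemma herm_add_left: "herm (x + y) z = herm x z + herm y z"
  by (simp add: herm_def distrib_right sum.distrib)
lemma herm_diff_right: "herm x (y - z) = herm x y - herm x z"
  by (simp add: herm_def right_diff_distrib sum_subtractf)
lemma herm_diff_left: "herm (x - y) z = herm x z - herm y z"
  by (simp add: herm_def left_diff_distrib sum_subtractf)
lemma herm_scale_right: "herm x (c *s y) = c * herm x y"
  by (simp add: herm_def sum_distrib_left algebra_simps)
lemma herm_scale_left: "herm (c *s x) y = cnj c * herm x y"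
  by (simp add: herm_def sum_distrib_left algebra_simps)
lemma herm_zero_right [simp]: "herm x 0 = 0" by (simp add: herm_def)
lemma herm_zero_left [simp]: "herm 0 x = 0" by (simp add: herm_def)
lemma herm_sym: "cnj (herm x y) = herm y x"
  by (simp add: herm_def mult.commute)

lemma inner_herm: "x \<bullet> y = Re (herm x y)"
  by (simp add: herm_def inner_vec_def inner_complex_def Re_sum)

lemma Im_herm_self: "Im (herm x x) = 0"
  by (simp add: herm_def Im_sum)

lemma herm_self: "herm x x = complex_of_real ((norm x)^2)"
proof -
  have "Re (herm x x) = (norm x)^2" by (simp add: power2_norm_eq_inner inner_herm)
  then show ?thesis using Im_herm_self by (simp add: complex_eq_iff)
qed

lemma norm_sq_herm: "(norm x)^2 = Re (herm x x)"
  by (simp add: herm_self)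

lemma cnj_mult_self: "cnj c * c = complex_of_real ((cmod c)^2)"
  by (metis complex_norm_square mult.commute)

lemma norm_scale_vec: "norm (c *s (x::complex^'n)) = cmod c * norm x"
proof -
  have "(norm (c *s x))^2 = Re (herm (c *s x) (c *s x))" by (rule norm_sq_herm)
  also have "\<dots> = (cmod c)^2 * (norm x)^2"
    unfolding herm_scale_left herm_scale_right mult.assoc[symmetric] cnj_mult_self herm_self[of x]
    using cmod_power2[of c] by (simp del: of_real_power add: power2_eq_square)
  also have "\<dots> = (cmod c * norm x)^2" by (simp add: power_mult_distrib)
  finally show ?thesis by (simp add: power2_eq_iff_nonneg)
qed

lemma herm_cs: "cmod (herm x y) \<le> norm x * norm y"
proof (cases "herm x y = 0")
  case True then show ?thesis by simp
next
  case False
  define h where "h = herm x y"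
  define p where "p = h / complex_of_real (cmod h)"
  have cp: "cmod p = 1" using False by (simp add: p_def h_def norm_divide)
  have "cmod h = Re (herm (p *s x) y)"
    using False by (simp add: herm_scale_left p_def h_def complex_norm_square[symmetric]
        field_simps power2_eq_square)
  also have "\<dots> = (p *s x) \<bullet> y" by (simp add: inner_herm)
  also have "\<dots> \<le> norm (p *s x) * norm y" by (rule norm_cauchy_schwarz)
  also have "\<dots> = norm x * norm y" by (simp add: norm_scale_vec cp)
  finally show ?thesis by (simp add: h_def)
qed

lemma pythag: "herm x y = 0 \<Longrightarrow> (norm (x + y))^2 = (norm x)^2 + (norm y)^2"
  by (simp add: norm_sq_herm herm_add_left herm_add_right herm_sym[of x y, symmetric])

lemma norm_add_sq: "(norm (x + y))^2 = (norm x)^2 + 2 * (x \<bullet> y) + (norm y)^2"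
  by (simp add: power2_norm_eq_inner inner_add inner_commute)

lemma sesq_herm: "sesq v X u = herm v (X *v u)"
  by (simp add: sesq_def herm_def)

lemma mv_scale: "(A::complex^'n^'m) *v (c *s x) = c *s (A *v x)"
  by (simp add: vec.scale)

lemma mat_comb: "(\<chi> i j. (B::complex^'n^'n)$i$j + c * A$i$j) *v x = B *v x + c *s (A *v x)"
  by (simp add: matrix_vector_mult_def vec_eq_iff sum.distrib sum_distrib_left algebra_simps)

lemma scaleR_vec_c: "r *\<^sub>R (x::complex^'n) = complex_of_real r *s x"
  by (simp only: vec_eq_iff vector_scaleR_component vector_smult_component) (simp add: scaleR_conv_of_real)

lemma bl_mv: "bounded_linear (\<lambda>x. (A::complex^'n^'m) *v x)"
  by simp

lemma opnorm_bound: "norm (A *v x) \<le> opnorm A * norm x"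
  unfolding opnorm_def by (rule onorm) simp

lemma opnorm_le: "(\<And>x. norm (A *v x) \<le> b * norm x) \<Longrightarrow> opnorm (A::complex^'n^'n) \<le> b"
  unfolding opnorm_def by (rule onorm_le)

lemma mv_scaleR: "(A::complex^'n^'m) *v (r *\<^sub>R x) = r *\<^sub>R (A *v x)"
  by (simp add: scaleR_vec_c mv_scale)

lemma norm_axis_c: "norm (axis i (1::complex)) = 1"
proof -
  have "herm (axis i (1::complex)) (axis i 1) = 1"
    by (simp add: herm_def axis_def if_distrib sum.If_cases cong: if_cong)
  then have "(norm (axis i (1::complex)))^2 = 1" by (simp add: norm_sq_herm)
  then show ?thesis by (simp add: power2_eq_1_iff)
qed

lemma orth_suff:
  fixes A B :: "complex^'n^'n"
  assumes x0: "norm x0 = 1" and mx: "norm (A *v x0) = opnorm A"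
    and h: "herm (A *v x0) (B *v x0) = 0"
  shows "bj_orth A B"
  unfolding bj_orth_def
proof
  fix c :: complex
  let ?M = "(\<chi> i j. A $ i $ j + c * B $ i $ j)"
  have "?M *v x0 = A *v x0 + c *s (B *v x0)" by (rule mat_comb)
  moreover have "herm (A *v x0) (c *s (B *v x0)) = 0" by (simp add: herm_scale_right h)
  ultimately have "(norm (?M *v x0))^2 = (norm (A *v x0))^2 + (norm (c *s (B *v x0)))^2"
    by (simp add: pythag)
  then have "(norm (A *v x0))^2 \<le> (norm (?M *v x0))^2" by simp
  then have "norm (A *v x0) \<le> norm (?M *v x0)" by (simp add: power2_le_iff_abs_le)
  also have "\<dots> \<le> opnorm ?M * norm x0" by (rule opnorm_bound)
  finally show "opnorm A \<le> opnorm ?M" using x0 mx by simp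
qed

lemma exists_max:
  fixes A :: "complex^'n^'n"
  shows "\<exists>x0. norm x0 = 1 \<and> norm (A *v x0) = opnorm A"
proof -
  let ?S = "sphere (0::complex^'n) 1"
  obtain i :: 'n where True by simp
  have ne: "?S \<noteq> {}"
  proof -
    have "norm (axis i (1::complex)) = 1" by (rule norm_axis_c)
    then show ?thesis by auto
  qed
  have cont: "continuous_on ?S (\<lambda>x. norm (A *v x))"
    by (intro continuous_intros)
  obtain x0 where x0S: "x0 \<in> ?S" and mx: "\<forall>y\<in>?S. norm (A *v y) \<le> norm (A *v x0)"
    using continuous_attains_sup[OF compact_sphere ne cont] by blast
  have n0: "norm x0 = 1" using x0S by simp
  have bnd: "norm (A *v y) \<le> norm (A *v x0) * norm y" for y
  proof (cases "y = 0")
    case True then show ?thesis by simp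
  next
    case False
    let ?z = "(1 / norm y) *\<^sub>R y"
    have "?z \<in> ?S" using False by simp
    then have "norm (A *v ?z) \<le> norm (A *v x0)" using mx by blast
    then have "norm (A *v y) / norm y \<le> norm (A *v x0)"
      by (simp add: mv_scaleR divide_inverse mult.commute)
    then show ?thesis using False by (simp add: divide_le_eq)
  qed
  have "opnorm A \<le> norm (A *v x0)" by (rule opnorm_le) (simp add: bnd)
  moreover have "norm (A *v x0) \<le> opnorm A" using opnorm_bound[of A x0] n0 by simp
  ultimately show ?thesis using n0 by (intro exI[of _ x0]) simp
qed

lemma quad_zero:
  fixes d e :: real
  assumes "\<And>t. 2 * t * d + t^2 * e \<le> 0"
  shows "d = 0"
proof (rule ccontr)
  assume dn: "d \<noteq> 0"
  define m where "m = \<bar>e\<bar> + 1"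
  define t where "t = d / m"
  have pos: "m > 0" by (simp add: m_def)
  have "2 * t * d + t^2 * e \<le> 0" by (rule assms)
  moreover have "2 * t * d + t^2 * e = (d^2 / m^2) * (2 * m + e)"
    using pos by (simp add: t_def field_simps power2_eq_square)
  moreover have "(d^2 / m^2) * (2 * m + e) > 0"
    using dn pos by (intro mult_pos_pos) (auto simp: m_def abs_if)
  ultimately show False by linarith
qed

lemma norm_diff_sq: "(norm (x - y))^2 = (norm x)^2 - 2 * (x \<bullet> y) + (norm y)^2"
  by (simp add: power2_norm_eq_inner inner_diff inner_commute)

lemma stat_real:
  fixes A :: "complex^'n^'n"
  assumes x0: "norm x0 = 1" and mx: "norm (A *v x0) = opnorm A"
  shows "(A *v x0) \<bullet> (A *v h) = (opnorm A)^2 * (x0 \<bullet> h)"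
proof -
  define s where "s = opnorm A"
  define w where "w = A *v x0"
  have key: "2 * t * (w \<bullet> (A *v h) - s^2 * (x0 \<bullet> h))
      + t^2 * ((norm (A *v h))^2 - s^2 * (norm h)^2) \<le> 0" for t :: real
  proof -
    have s0: "s \<ge> 0" unfolding s_def opnorm_def by (rule onorm_pos_le) simp
    have "norm (A *v (x0 + t *\<^sub>R h)) \<le> s * norm (x0 + t *\<^sub>R h)"
      unfolding s_def by (rule opnorm_bound)
    then have "(norm (A *v (x0 + t *\<^sub>R h)))^2 \<le> (s * norm (x0 + t *\<^sub>R h))^2"
      by (simp add: power_mono)
    moreover have "A *v (x0 + t *\<^sub>R h) = w + t *\<^sub>R (A *v h)"
      by (simp add: w_def matrix_vector_right_distrib mv_scaleR)
    ultimately have "(norm (w + t *\<^sub>R (A *v h)))^2 \<le> s^2 * (norm (x0 + t *\<^sub>R h))^2"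
      by (simp add: power_mult_distrib)
    moreover have "(norm w)^2 = s^2" using mx by (simp add: w_def s_def)
    ultimately show ?thesis using x0
      by (simp add: norm_add_sq power_mult_distrib algebra_simps)
  qed
  have "w \<bullet> (A *v h) - s^2 * (x0 \<bullet> h) = 0" by (rule quad_zero) (rule key)
  then show ?thesis by (simp add: w_def s_def)
qed

lemma stat:
  fixes A :: "complex^'n^'n"
  assumes x0: "norm x0 = 1" and mx: "norm (A *v x0) = opnorm A"
  shows "herm (A *v x0) (A *v h) = complex_of_real ((opnorm A)^2) * herm x0 h"
proof -
  let ?s = "(opnorm A)^2"
  have re: "Re (herm (A *v x0) (A *v h)) = ?s * Re (herm x0 h)" for h
    using stat_real[OF x0 mx, of h] by (simp add: inner_herm)
  have "Re ((-\<i>) * herm (A *v x0) (A *v h)) = ?s * Re ((-\<i>) * herm x0 h)"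
    using re[of "(-\<i>) *s h"] unfolding mv_scale herm_scale_right .
  then have im: "Im (herm (A *v x0) (A *v h)) = ?s * Im (herm x0 h)"
    by simp
  show ?thesis using re[of h] im by (simp add: complex_eq_iff)
qed

lemma mat_ne0: "(B::complex^'n^'n) \<noteq> 0 \<Longrightarrow> \<exists>x. B *v x \<noteq> 0"
proof -
  assume "B \<noteq> 0"
  then obtain i j where "B $ i $ j \<noteq> 0" by (auto simp: vec_eq_iff)
  moreover have "(B *v axis j 1) $ i = B $ i $ j"
    by (simp add: matrix_vector_mult_def axis_def if_distrib sum.If_cases)
  ultimately have "B *v axis j 1 \<noteq> 0" by (metis zero_index)
  then show ?thesis by blast
qed

lemma real_key:
  fixes p q r a c t \<beta> K :: real
  assumes p0: "0 \<le> p" and pb: "p \<le> \<beta> * a" and qb: "q \<ge> p^2 - p * K * c"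
    and rb: "r^2 \<le> K^2 * (a^2 + c^2)" and a0: "0 \<le> a" and c0: "0 \<le> c"
    and t0: "0 < t" and th: "t \<le> 1/2" and tK: "2 * K^2 * t \<le> \<beta>^2" and K0: "K > 0"
    and b0: "\<beta> > 0"
  shows "p^2 - 2 * t * q + t^2 * r^2 \<le> (1 - t/2) * \<beta>^2 * (a^2 + c^2)"
proof -
  have "2 * t * (p^2 - p * K * c) \<le> 2 * t * q" using qb t0 by (intro mult_left_mono) auto
  then have "p^2 - 2 * t * q \<le> (1 - 2*t) * p^2 + 2 * t * (p * K * c)"
    by (simp add: algebra_simps)
  also have "\<dots> \<le> (1 - 2*t) * (\<beta> * a)^2 + 2 * t * (\<beta> * a * K * c)"
  proof (intro add_mono mult_left_mono)
    show "p^2 \<le> (\<beta> * a)^2" using p0 pb by (simp add: power_mono)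
    show "p * K * c \<le> \<beta> * a * K * c" using pb K0 c0 by (simp add: mult_right_mono)
  qed (use t0 th in auto)
  also have "\<dots> \<le> (1 - 2*t) * (\<beta> * a)^2 + t * (\<beta>^2 * a^2 + K^2 * c^2)"
  proof -
    have "2 * (\<beta> * a) * (K * c) \<le> (\<beta> * a)^2 + (K * c)^2"
      by (smt (verit) sum_squares_bound)
    then have "t * (2 * (\<beta> * a) * (K * c)) \<le> t * ((\<beta> * a)^2 + (K * c)^2)"
      using t0 by (intro mult_left_mono) auto
    then show ?thesis by (simp add: power_mult_distrib algebra_simps)
  qed
  finally have h1: "p^2 - 2 * t * q \<le> (1 - 2*t) * (\<beta> * a)^2 + t * (\<beta>^2 * a^2 + K^2 * c^2)" .
  have h2: "t^2 * r^2 \<le> t^2 * (K^2 * (a^2 + c^2))" using rb by (simp add: mult_left_mono)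
  have e1: "t * K^2 \<le> \<beta>^2 / 2" using tK by (simp add: mult.commute)
  have e2: "t^2 * K^2 * a^2 \<le> t * (\<beta>^2 / 2) * a^2"
  proof -
    have "t * (t * K^2) \<le> t * (\<beta>^2 / 2)" using e1 t0 by (simp add: mult_left_mono)
    then have "t * (t * K^2) * a^2 \<le> t * (\<beta>^2 / 2) * a^2" by (rule mult_right_mono) simp
    then show ?thesis by (simp add: power2_eq_square algebra_simps)
  qed
  have e3: "t * K^2 * c^2 + t^2 * K^2 * c^2 \<le> (1 - t/2) * \<beta>^2 * c^2"
  proof -
    have "t * K^2 * (1 + t) \<le> (\<beta>^2 / 2) * (3/2)"
      using e1 th t0 by (intro mult_mono) auto
    also have "\<dots> \<le> (1 - t/2) * \<beta>^2"
    proof -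
      have "t * \<beta>^2 \<le> (1/2) * \<beta>^2" using th by (rule mult_right_mono) simp
      then show ?thesis by (simp add: algebra_simps)
    qed
    finally have "t * K^2 * (1 + t) * c^2 \<le> (1 - t/2) * \<beta>^2 * c^2"
      by (simp add: mult_right_mono)
    then show ?thesis by (simp add: power2_eq_square algebra_simps)
  qed
  have h1': "p^2 - 2 * t * q \<le> (1 - t) * \<beta>^2 * a^2 + t * K^2 * c^2"
    using h1 by (simp add: power_mult_distrib algebra_simps)
  have h2': "t^2 * r^2 \<le> t^2 * K^2 * a^2 + t^2 * K^2 * c^2"
    using h2 by (simp add: algebra_simps)
  have "p^2 - 2 * t * q + t^2 * r^2
      \<le> ((1 - t) * \<beta>^2 * a^2 + t * K^2 * c^2) + (t^2 * K^2 * a^2 + t^2 * K^2 * c^2)"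
    using h1' h2' by (rule add_mono)
  also have "\<dots> = (1 - t) * \<beta>^2 * a^2 + t^2 * K^2 * a^2 + (t * K^2 * c^2 + t^2 * K^2 * c^2)"
    by simp
  also have "\<dots> \<le> (1 - t) * \<beta>^2 * a^2 + t * (\<beta>^2 / 2) * a^2 + (1 - t/2) * \<beta>^2 * c^2"
    using e2 e3 by (intro add_mono) auto
  also have "\<dots> = (1 - t/2) * \<beta>^2 * (a^2 + c^2)"
    by (simp add: algebra_simps)
  finally show ?thesis .
qed

lemma not_orth:
  fixes A B :: "complex^'n^'n" and Q :: "complex^'n \<Rightarrow> complex^'n"
  assumes BQ: "\<And>x. B *v Q x = B *v x"
    and QP: "\<And>x. (norm (Q x))^2 + (norm (x - Q x))^2 = (norm x)^2"
    and pos: "\<And>x. (B *v x) \<bullet> (A *v Q x) \<ge> (norm (B *v x))^2"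
    and B0: "B \<noteq> 0"
  shows "\<not> bj_orth B A"
proof
  assume orth: "bj_orth B A"
  define \<beta> where "\<beta> = opnorm B"
  define K where "K = opnorm A + 1"
  have K0: "K > 0" unfolding K_def opnorm_def using onorm_pos_le[of "(*v) A"] by simp
  obtain x1 where x1: "B *v x1 \<noteq> 0" using mat_ne0[OF B0] by blast
  have b0: "\<beta> > 0"
  proof -
    have "0 < norm (B *v x1)" using x1 by simp
    also have "\<dots> \<le> \<beta> * norm x1" unfolding \<beta>_def by (rule opnorm_bound)
    finally have "0 < \<beta> * norm x1" .
    moreover have "\<beta> \<ge> 0" unfolding \<beta>_def opnorm_def by (rule onorm_pos_le) simp
    ultimately show ?thesis by (cases "\<beta> = 0") auto
  qed
  define t where "t = min (1/2) (\<beta>^2 / (2 * K^2))"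
  have t0: "t > 0" using b0 K0 by (simp add: t_def)
  have th: "t \<le> 1/2" by (simp add: t_def)
  have tK: "2 * K^2 * t \<le> \<beta>^2"
  proof -
    have "t \<le> \<beta>^2 / (2 * K^2)" by (simp add: t_def)
    then show ?thesis using K0 by (simp add: field_simps)
  qed
  let ?M = "(\<chi> i j. B $ i $ j + complex_of_real (-t) * A $ i $ j)"
  have Mx: "?M *v x = B *v x - t *\<^sub>R (A *v x)" for x
    unfolding mat_comb by (simp add: scaleR_vec_c)
  have AK: "norm (A *v y) \<le> K * norm y" for y
  proof -
    have "norm (A *v y) \<le> opnorm A * norm y" by (rule opnorm_bound)
    also have "\<dots> \<le> K * norm y" by (simp add: K_def mult_right_mono)
    finally show ?thesis .
  qed
  have pt: "(norm (?M *v x))^2 \<le> (1 - t/2) * \<beta>^2 * (norm x)^2" for x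
  proof -
    define x1 where "x1 = Q x"
    define x2 where "x2 = x - Q x"
    have xs: "x = x1 + x2" by (simp add: x1_def x2_def)
    have Bx: "B *v x = B *v x1" by (simp add: x1_def BQ)
    define p where "p = norm (B *v x)"
    define q where "q = (B *v x) \<bullet> (A *v x)"
    define r where "r = norm (A *v x)"
    have "(norm (?M *v x))^2 = p^2 - 2 * t * q + t^2 * r^2"
      unfolding Mx by (simp add: norm_diff_sq p_def q_def r_def power_mult_distrib)
    also have "\<dots> \<le> (1 - t/2) * \<beta>^2 * ((norm x1)^2 + (norm x2)^2)"
    proof (rule real_key[OF _ _ _ _ _ _ t0 th tK K0 b0])
      show "0 \<le> p" by (simp add: p_def)
      show "p \<le> \<beta> * norm x1" unfolding p_def Bx \<beta>_def by (rule opnorm_bound)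
      have Ax: "A *v x = A *v x1 + A *v x2" by (simp add: xs matrix_vector_right_distrib)
      have "q = (B *v x) \<bullet> (A *v x1) + (B *v x) \<bullet> (A *v x2)"
        by (simp add: q_def Ax inner_add_right)
      moreover have "(B *v x) \<bullet> (A *v x1) \<ge> p^2" unfolding p_def x1_def by (rule pos)
      moreover have "\<bar>(B *v x) \<bullet> (A *v x2)\<bar> \<le> p * (K * norm x2)"
      proof -
        have "\<bar>(B *v x) \<bullet> (A *v x2)\<bar> \<le> p * norm (A *v x2)"
          unfolding p_def by (rule Cauchy_Schwarz_ineq2)
        also have "\<dots> \<le> p * (K * norm x2)" by (simp add: AK mult_left_mono p_def)
        finally show ?thesis .
      qed
      ultimately show "q \<ge> p^2 - p * K * norm x2" by (simp add: mult.assoc)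
      have "r \<le> K * norm x" unfolding r_def by (rule AK)
      then have "r^2 \<le> (K * norm x)^2" by (simp add: r_def power_mono)
      then show "r^2 \<le> K^2 * ((norm x1)^2 + (norm x2)^2)"
        by (simp add: x1_def x2_def QP power_mult_distrib)
    qed simp_all
    also have "\<dots> = (1 - t/2) * \<beta>^2 * (norm x)^2" by (simp add: x1_def x2_def QP)
    finally show ?thesis .
  qed
  have "opnorm ?M \<le> sqrt (1 - t/2) * \<beta>"
  proof (rule opnorm_le)
    fix x
    have "(norm (?M *v x))^2 \<le> (sqrt (1 - t/2) * \<beta> * norm x)^2"
      using pt th by (simp add: power_mult_distrib)
    moreover have "0 \<le> sqrt (1 - t/2) * \<beta> * norm x"
      using th b0 by (intro mult_nonneg_nonneg) auto
    ultimately show "norm (?M *v x) \<le> sqrt (1 - t/2) * \<beta> * norm x"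
      by (rule power2_le_imp_le)
  qed
  also have "\<dots> < \<beta>"
  proof -
    have "sqrt (1 - t/2) < 1" using t0 by simp
    then show ?thesis using b0 by simp
  qed
  finally have "opnorm ?M < opnorm B" by (simp add: \<beta>_def)
  moreover have "opnorm B \<le> opnorm ?M" using orth unfolding bj_orth_def by blast
  ultimately show False by simp
qed

lemma mv_axis: "((A::complex^'n^'m) *v axis j 1) $ i = A $ i $ j"
  by (simp add: matrix_vector_mult_def axis_def if_distrib sum.If_cases)

lemma rank_le:
  fixes A :: "complex^'n^'m"
  assumes fG: "finite G" and col: "\<And>j. A *v axis j 1 \<in> vec.span G"
  shows "rank A \<le> card G"
proof -
  have "\<forall>j. \<exists>u. A *v axis j 1 = (\<Sum>g\<in>G. u g *s g)"
    using col unfolding vec.span_finite[OF fG] by (metis (no_types, lifting) imageE)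
  then obtain c where c: "\<And>j. A *v axis j 1 = (\<Sum>g\<in>G. c j g *s g)" by metis
  define F where "F = (\<lambda>g. \<chi> j. c j g) ` G"
  have "rows A \<subseteq> vec.span F"
  proof
    fix r assume "r \<in> rows A"
    then obtain i where ri: "r = row i A" by (auto simp: rows_def)
    have "r = (\<Sum>g\<in>G. (g $ i) *s (\<chi> j. c j g))"
    proof -
      have "r $ j = (\<Sum>g\<in>G. (g $ i) * c j g)" for j
      proof -
        have "r $ j = (A *v axis j 1) $ i" by (simp add: ri row_def mv_axis)
        also have "\<dots> = (\<Sum>g\<in>G. c j g * g $ i)" by (simp add: c)
        finally show ?thesis by (simp add: mult.commute)
      qed
      then show ?thesis by (simp add: vec_eq_iff)
    qed
    also have "\<dots> \<in> vec.span F"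
      by (intro vec.span_sum vec.span_scale vec.span_base) (auto simp: F_def)
    finally show "r \<in> vec.span F" .
  qed
  then have "rank A \<le> vec.dim F" unfolding row_rank_def_gen by (rule vec.dim_mono)
  also have "\<dots> \<le> card F" using fG by (simp add: F_def vec.dim_le_card')
  also have "\<dots> \<le> card G" unfolding F_def using fG by (rule card_image_le)
  finally show ?thesis .
qed

lemma rank_invertible:
  fixes B :: "complex^'n^'n"
  assumes "invertible B"
  shows "rank B = CARD('n)"
proof -
  obtain B' where B': "B' ** B = mat 1" using assms unfolding invertible_def by blast
  have "axis i 1 \<in> vec.span (rows B)" for i
  proof -
    have "axis i (1::complex) = (\<Sum>l\<in>UNIV. (B' $ i $ l) *s row l B)"
    proof -
      have eq: "(\<Sum>l\<in>UNIV. B' $ i $ l * B $ l $ j) = (mat 1 :: complex^'n^'n) $ i $ j" for j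
        unfolding B'[symmetric] by (simp add: matrix_matrix_mult_def)
      show ?thesis by (auto simp: vec_eq_iff row_def axis_def eq mat_def)
    qed
    also have "\<dots> \<in> vec.span (rows B)"
      by (intro vec.span_sum vec.span_scale vec.span_base) (auto simp: rows_def)
    finally show ?thesis .
  qed
  then have "cart_basis \<subseteq> vec.span (rows B)" by (auto simp: cart_basis_def)
  then have "vec.span cart_basis \<subseteq> vec.span (rows B)"
    by (metis vec.span_minimal vec.subspace_span)
  then have U: "(UNIV :: (complex^'n) set) \<subseteq> vec.span (rows B)" by simp
  have "CARD('n) \<le> vec.dim (rows B)" using vec.dim_mono[OF U] unfolding vec_dim_card .
  then have "CARD('n) \<le> rank B" by (simp add: row_rank_def_gen)
  moreover have "rank B \<le> CARD('n)"
    using vec.dim_subset[of "rows B" UNIV] unfolding vec_dim_card by (simp add: row_rank_def_gen)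
  ultimately show ?thesis by simp
qed

lemma herm_sum_right: "herm x (sum f S) = (\<Sum>g\<in>S. herm x (f g))"
  by (simp add: herm_def sum_distrib_left sum_component) (rule sum.swap)

lemma separate:
  fixes a :: "complex^'n"
  assumes na: "a \<notin> vec.span S"
  shows "\<exists>y. (\<forall>g\<in>S. herm y g = 0) \<and> herm y a \<noteq> 0"
proof -
  define T where "T = S \<union> (\<lambda>g. \<i> *s g) ` S"
  have sub: "span T \<subseteq> vec.span S"
  proof (rule span_minimal)
    show "T \<subseteq> vec.span S"
      by (auto simp: T_def intro: vec.span_base vec.span_scale)
    show "subspace (vec.span S)"
      unfolding subspace_def
      by (auto simp: scaleR_vec_c intro: vec.span_zero vec.span_add vec.span_scale)
  qed
  obtain p z where p: "p \<in> span T" and z: "\<And>w. w \<in> span T \<Longrightarrow> orthogonal z w"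
    and apz: "a = p + z"
    using orthogonal_subspace_decomp_exists[of T a] by blast
  have zT: "z \<bullet> w = 0" if "w \<in> T" for w
    using z[of w] that span_base[of w T] by (simp add: orthogonal_def)
  have "herm z g = 0" if g: "g \<in> S" for g
  proof -
    have "Re (herm z g) = 0" using zT[of g] g by (simp add: T_def inner_herm)
    moreover have "Re (herm z (\<i> *s g)) = 0" using zT[of "\<i> *s g"] g by (simp add: T_def inner_herm)
    then have "Im (herm z g) = 0" by (simp add: herm_scale_right)
    ultimately show ?thesis by (simp add: complex_eq_iff)
  qed
  moreover have "herm z a \<noteq> 0"
  proof
    assume h: "herm z a = 0"
    have "z \<bullet> p = 0" using z[OF p] by (simp add: orthogonal_def)
    then have "z \<bullet> a = z \<bullet> z" by (simp add: apz inner_add_right)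
    moreover have "z \<bullet> a = 0" using h by (simp add: inner_herm)
    ultimately have "z = 0" by simp
    then have "a \<in> vec.span S" using apz p sub by auto
    then show False using na by simp
  qed
  ultimately show ?thesis by blast
qed

lemma span_perp:
  fixes z w vj :: "complex^'n"
  assumes zS: "z \<in> vec.span S" and fS: "finite S" and vjS: "vj \<in> S"
    and wv: "herm w vj \<noteq> 0" and wz: "herm w z = 0"
  shows "z \<in> vec.span ((\<lambda>g. g - (herm w g / herm w vj) *s vj) ` (S - {vj}))"
proof -
  define f where "f = (\<lambda>g. g - (herm w g / herm w vj) *s vj)"
  obtain u where zu: "z = (\<Sum>g\<in>S. u g *s g)"
    using zS unfolding vec.span_finite[OF fS] by blast
  have "herm w z = (\<Sum>g\<in>S. u g * herm w g)"
    by (simp add: zu herm_sum_right herm_scale_right)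
  then have s0: "(\<Sum>g\<in>S. u g * (herm w g / herm w vj)) = 0"
    using wz wv by (simp add: sum_divide_distrib[symmetric] mult.assoc[symmetric]
        times_divide_eq_right)
  have "(\<Sum>g\<in>S. u g *s f g) = z - (\<Sum>g\<in>S. u g * (herm w g / herm w vj)) *s vj"
    by (simp add: f_def zu vector_ssub_ldistrib sum_subtractf vec.scale_sum_left
        vector_smult_assoc)
  then have z1: "z = (\<Sum>g\<in>S. u g *s f g)" using s0 by simp
  have "(\<Sum>g\<in>S. u g *s f g) = (\<Sum>g\<in>S - {vj}. u g *s f g)"
  proof -
    have "f vj = 0" using wv by (simp add: f_def)
    then show ?thesis using fS vjS by (simp add: sum.remove)
  qed
  also have "\<dots> \<in> vec.span (f ` (S - {vj}))"
    by (intro vec.span_sum vec.span_scale vec.span_base) auto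
  finally show ?thesis using z1 by (simp add: f_def)
qed

lemma herm_axis: "herm x (axis i 1) = cnj (x $ i)"
  by (simp add: herm_def axis_def if_distrib sum.If_cases cong: if_cong)

lemma exists_perp_unit:
  fixes x0 :: "complex^'n"
  assumes n2: "CARD('n) \<ge> 2" and x0: "x0 \<noteq> 0"
  shows "\<exists>e. norm e = 1 \<and> herm x0 e = 0"
proof -
  obtain i where xi: "x0 $ i \<noteq> 0" using x0 by (auto simp: vec_eq_iff)
  have "\<not> (\<forall>j::'n. j = i)"
  proof
    assume "\<forall>j::'n. j = i"
    then have "(UNIV :: 'n set) = {i}" by auto
    then have "CARD('n) = card {i}" by (rule arg_cong)
    then have "CARD('n) = 1" by simp
    then show False using n2 by simp
  qed
  then obtain j :: 'n where ji: "j \<noteq> i" by blast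
  define e' where "e' = cnj (x0 $ j) *s axis i 1 - cnj (x0 $ i) *s axis j (1::complex)"
  have h0: "herm x0 e' = 0"
    by (simp add: e'_def herm_diff_right herm_scale_right herm_axis)
  have "e' $ j = - cnj (x0 $ i)" using ji by (simp add: e'_def axis_def)
  then have e0: "e' \<noteq> 0" using xi by auto
  define e where "e = complex_of_real (1 / norm e') *s e'"
  have "norm e = 1" using e0 by (simp add: e_def norm_scale_vec norm_divide)
  moreover have "herm x0 e = 0" by (simp add: e_def herm_scale_right h0)
  ultimately show ?thesis by blast
qed

lemma matrix_lin:
  fixes f :: "complex^'n \<Rightarrow> complex^'n"
  assumes add: "\<And>x y. f (x + y) = f x + f y" and sc: "\<And>c x. f (c *s x) = c *s f x"
  shows "matrix f *v x = f x"
  by (rule matrix_works) (simp add: Vector_Spaces.linear_iff vec.vector_space_axioms add sc)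

lemma bessel2:
  fixes x0 e x :: "complex^'n"
  assumes x0: "norm x0 = 1" and e: "norm e = 1" and o: "herm x0 e = 0"
  shows "(cmod (herm x0 x))^2 + (cmod (herm e x))^2 \<le> (norm x)^2"
proof -
  define a where "a = herm x0 x"
  define b where "b = herm e x"
  define p where "p = a *s x0 + b *s e"
  have ex0: "herm e x0 = 0" using o herm_sym[of x0 e] by simp
  have hx0: "herm x0 x0 = 1" using x0 by (simp add: herm_self)
  have he: "herm e e = 1" using e by (simp add: herm_self)
  have px: "herm p x = cnj a * a + cnj b * b"
    by (simp add: p_def herm_add_left herm_scale_left a_def b_def)
  have pp: "herm p p = cnj a * a + cnj b * b"
    by (simp add: p_def herm_add_left herm_add_right herm_scale_left herm_scale_right hx0 he ex0 o)
  have "herm p (x - p) = 0" by (simp add: herm_diff_right px pp)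
  then have "(norm (p + (x - p)))^2 = (norm p)^2 + (norm (x - p))^2" by (rule pythag)
  then have "(norm p)^2 \<le> (norm x)^2" by simp
  moreover have "(norm p)^2 = (cmod a)^2 + (cmod b)^2"
    by (simp add: norm_sq_herm pp cnj_mult_self)
  ultimately show ?thesis by (simp add: a_def b_def)
qed

lemma cpar: "(cmod (b - a))^2 + (cmod (a + b))^2 = 2 * ((cmod a)^2 + (cmod b)^2)"
  by (simp only: cmod_power2) (simp add: power2_eq_square algebra_simps)

lemma norm_two: 
  fixes w f :: "complex^'n"
  assumes "herm w f = 0"
  shows "(norm (\<alpha> *s w + \<beta> *s f))^2 = (cmod \<alpha> * norm w)^2 + (cmod \<beta> * norm f)^2"
proof -
  have "herm (\<alpha> *s w) (\<beta> *s f) = 0" by (simp add: herm_scale_left herm_scale_right assms)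
  then show ?thesis by (simp add: pythag norm_scale_vec)
qed

lemma main1:
  fixes v u :: "nat \<Rightarrow> complex^'n" and k :: nat and A :: "complex^'n^'n"
  assumes n2: "CARD('n) \<ge> 2"
    and AV: "\<And>i. i \<in> {1..k} \<Longrightarrow> herm (v i) (A *v u i) = 0"
    and rk: "rank A > k"
  shows "\<exists>B. (\<forall>i\<in>{1..k}. herm (v i) (B *v u i) = 0) \<and> bj_orth A B \<and> \<not> bj_orth B A"
proof -
  have A0: "A \<noteq> 0"
  proof
    assume "A = 0"
    then have "rank A \<le> card ({} :: (complex^'n) set)"
      by (intro rank_le) (auto intro: vec.span_zero)
    then show False using rk by simp
  qed
  obtain x0 where x0: "norm x0 = 1" and mx: "norm (A *v x0) = opnorm A"
    using exists_max by blast
  define s where "s = opnorm A"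
  define w where "w = A *v x0"
  have s0: "s > 0"
  proof -
    obtain x1 where x1: "A *v x1 \<noteq> 0" using mat_ne0[OF A0] by blast
    have "0 < norm (A *v x1)" using x1 by simp
    also have "\<dots> \<le> s * norm x1" unfolding s_def by (rule opnorm_bound)
    finally have "0 < s * norm x1" .
    moreover have "s \<ge> 0" unfolding s_def opnorm_def by (rule onorm_pos_le) simp
    ultimately show ?thesis by (cases "s = 0") auto
  qed
  have nw: "norm w = s" by (simp add: w_def s_def mx)
  have st: "\<And>h. herm w (A *v h) = complex_of_real (s^2) * herm x0 h"
    using stat[OF x0 mx] by (simp add: w_def s_def)
  have hww: "herm w w = complex_of_real (s^2)" by (simp add: herm_self nw)
  have hx0: "herm x0 x0 = 1" by (simp add: herm_self x0)
  have orth: "\<And>B. herm w (B *v x0) = 0 \<Longrightarrow> bj_orth A B"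
    using orth_suff[OF x0 mx] by (simp add: w_def)
  define f where "f = (\<lambda>x. A *v x - herm x0 x *s w)"
  define PA where "PA = matrix f"
  have PAx: "PA *v x = f x" for x
    unfolding PA_def
    by (rule matrix_lin) (simp_all add: f_def matrix_vector_right_distrib herm_add_right mv_scale
        herm_scale_right vector_sadd_rdistrib vector_ssub_ldistrib vector_smult_assoc algebra_simps)
  show ?thesis
  proof (cases "PA = 0")
    case True
    then have Ax: "A *v x = herm x0 x *s w" for x
      using PAx[of x] by (simp add: f_def)
    have "rank A \<le> card {w}"
      by (rule rank_le) (simp_all add: Ax vec.span_scale vec.span_base)
    then have k0: "k = 0" using rk by simp
    have x00: "x0 \<noteq> 0" using x0 by auto
    obtain e where e: "norm e = 1" and oe: "herm x0 e = 0" using exists_perp_unit[OF n2 x00] by blast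
    have w0: "w \<noteq> 0" using nw s0 by auto
    obtain f1 where f1: "norm f1 = 1" and of1: "herm w f1 = 0"
      using exists_perp_unit[OF n2 w0] by blast
    define sf where "sf = complex_of_real s *s f1"
    have nsf: "norm sf = s" using s0 by (simp add: sf_def norm_scale_vec f1)
    have osf: "herm w sf = 0" by (simp add: sf_def herm_scale_right of1)
    define g where "g = (\<lambda>x. herm e x *s w + (herm x0 x + herm e x) *s sf)"
    define B where "B = matrix g"
    have Bx: "B *v x = g x" for x
      unfolding B_def
      by (rule matrix_lin) (simp_all add: g_def herm_add_right herm_scale_right
          vector_sadd_rdistrib vector_smult_assoc algebra_simps)
    have ex0: "herm e x0 = 0" using oe herm_sym[of x0 e] by simp
    have AB: "bj_orth A B"
      by (rule orth) (simp add: Bx g_def herm_add_right herm_scale_right ex0 osf)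
    have nBA: "\<not> bj_orth B A"
    proof
      assume BA: "bj_orth B A"
      let ?M = "(\<chi> i j. B $ i $ j + (-1) * A $ i $ j)"
      have "opnorm B \<le> opnorm ?M" using BA unfolding bj_orth_def by blast
      moreover have "opnorm ?M \<le> sqrt 2 * s"
      proof (rule opnorm_le)
        fix x
        have eqM: "?M *v x = (herm e x - herm x0 x) *s w + (herm x0 x + herm e x) *s sf"
          unfolding mat_comb by (simp add: Bx g_def Ax vector_sadd_rdistrib vector_ssub_ldistrib
              algebra_simps)
        have "(norm (?M *v x))^2 = (cmod (herm e x - herm x0 x) * norm w)^2
            + (cmod (herm x0 x + herm e x) * norm sf)^2"
          unfolding eqM by (rule norm_two[OF osf])
        also have "\<dots> = (cmod (herm e x - herm x0 x) * s)^2 + (cmod (herm x0 x + herm e x) * s)^2"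
          by (simp only: nw nsf)
        also have "\<dots> = s^2 * ((cmod (herm e x - herm x0 x))^2 + (cmod (herm x0 x + herm e x))^2)"
          by (simp add: power_mult_distrib algebra_simps)
        also have "\<dots> = s^2 * (2 * ((cmod (herm x0 x))^2 + (cmod (herm e x))^2))"
          by (simp only: cpar[where a="herm x0 x" and b="herm e x"])
        also have "\<dots> = 2 * s^2 * ((cmod (herm x0 x))^2 + (cmod (herm e x))^2)"
          by simp
        also have "\<dots> \<le> 2 * s^2 * (norm x)^2"
          using bessel2[OF x0 e oe, of x] by (intro mult_left_mono) auto
        also have "\<dots> = (sqrt 2 * s * norm x)^2" by (simp add: power_mult_distrib)
        finally show "norm (?M *v x) \<le> sqrt 2 * s * norm x"
          by (rule power2_le_imp_le) (use s0 in simp)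
      qed
      moreover have "13 * s^2 \<le> 5 * (opnorm B)^2"
      proof -
        define x1 where "x1 = x0 + 2 *s e"
        have h1: "herm x0 x1 = 1" by (simp add: x1_def herm_add_right herm_scale_right hx0 oe)
        have h2: "herm e x1 = 2"
          using e by (simp add: x1_def herm_add_right herm_scale_right ex0 herm_self)
        have "B *v x1 = 2 *s w + 3 *s sf" by (simp add: Bx g_def h1 h2 vec_eq_iff algebra_simps)
        then have "(norm (B *v x1))^2 = 13 * s^2"
          by (simp add: norm_two osf nw nsf power_mult_distrib)
        moreover have "(norm x1)^2 = 5"
        proof -
          have "herm x0 (2 *s e) = 0" by (simp add: herm_scale_right oe)
          then have "(norm x1)^2 = (norm x0)^2 + (norm (2 *s e))^2" unfolding x1_def by (rule pythag)
          then show ?thesis by (simp add: x0 norm_scale_vec e)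
        qed
        moreover have "norm (B *v x1) \<le> opnorm B * norm x1" by (rule opnorm_bound)
        then have "(norm (B *v x1))^2 \<le> (opnorm B * norm x1)^2" by (simp add: power_mono)
        ultimately show ?thesis by (simp add: power_mult_distrib)
      qed
      moreover have "opnorm B \<ge> 0" unfolding opnorm_def by (rule onorm_pos_le) simp
      ultimately have "opnorm B \<le> sqrt 2 * s" and "opnorm B \<ge> 0" by linarith+
      then have "(opnorm B)^2 \<le> (sqrt 2 * s)^2" by (intro power_mono)
      then have "(opnorm B)^2 \<le> 2 * s^2" by (simp add: power_mult_distrib)
      moreover have "s^2 > 0" using s0 by simp
      ultimately show False using \<open>13 * s^2 \<le> 5 * (opnorm B)^2\<close> by linarith
    qed
    show ?thesis using k0 AB nBA by auto
  next
    case False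
    note PA0 = False
    show ?thesis
    proof (cases "\<forall>i\<in>{1..k}. herm (v i) w = 0")
      case True
      have inV: "\<forall>i\<in>{1..k}. herm (v i) (PA *v u i) = 0"
        using True AV by (simp add: PAx f_def herm_diff_right herm_scale_right)
      have AB: "bj_orth A PA"
        by (rule orth) (simp add: PAx f_def herm_diff_right herm_scale_right hx0 w_def)
      have nBA: "\<not> bj_orth PA A"
      proof (rule not_orth[where Q = "\<lambda>x. x"])
        fix x
        have o: "herm w (PA *v x) = 0"
          by (simp add: PAx f_def herm_diff_right herm_scale_right st hww)
        have "herm (PA *v x) (A *v x) = herm (PA *v x) (PA *v x + herm x0 x *s w)"
          by (simp add: PAx f_def)
        also have "\<dots> = herm (PA *v x) (PA *v x)"
          using o herm_sym[of w "PA *v x"] by (simp add: herm_add_right herm_scale_right)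
        finally show "(PA *v x) \<bullet> (A *v x) \<ge> (norm (PA *v x))^2"
          by (simp add: inner_herm norm_sq_herm)
      qed (simp_all add: PA0)
      show ?thesis using inV AB nBA by blast
    next
      case False
      then obtain j where j: "j \<in> {1..k}" and vjw: "herm (v j) w \<noteq> 0" by blast
      have wvj: "herm w (v j) \<noteq> 0" using vjw herm_sym[of "v j" w] by (metis complex_cnj_zero_iff)
      define Q where "Q = (\<lambda>x. x - herm x0 x *s x0)"
      have hQ: "herm x0 (Q x) = 0" for x by (simp add: Q_def herm_diff_right herm_scale_right hx0)
      define S where "S = v ` {1..k}"
      have fS: "finite S" by (simp add: S_def)
      show ?thesis
      proof (cases "\<exists>x. A *v Q x \<notin> vec.span S")
        case True
        then obtain x1 where x1: "A *v Q x1 \<notin> vec.span S" by blast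
        obtain y' where y'S: "\<forall>g\<in>S. herm y' g = 0" and y'a: "herm y' (A *v Q x1) \<noteq> 0"
          using separate[OF x1] by blast
        have y'0: "y' \<noteq> 0" using y'a by auto
        define y where "y = complex_of_real (1 / norm y') *s y'"
        have ny: "norm y = 1" using y'0 by (simp add: y_def norm_scale_vec norm_divide)
        have yS: "herm y (v i) = 0" if "i \<in> {1..k}" for i
          using y'S that by (simp add: y_def herm_scale_left S_def)
        have ya: "herm y (A *v Q x1) \<noteq> 0" using y'a y'0 by (simp add: y_def herm_scale_left)
        define g where "g = (\<lambda>x. herm y (A *v Q x) *s y)"
        define B where "B = matrix g"
        have Bx: "B *v x = g x" for x
          unfolding B_def
          by (rule matrix_lin) (simp_all add: g_def Q_def herm_add_right herm_scale_right herm_diff_right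
              matrix_vector_right_distrib mv_scale matrix_vector_mult_diff_distrib
              vector_sadd_rdistrib vector_ssub_ldistrib vector_smult_assoc algebra_simps)
        have inV: "\<forall>i\<in>{1..k}. herm (v i) (B *v u i) = 0"
        proof
          fix i assume i: "i \<in> {1..k}"
          have "herm (v i) y = 0" using yS[OF i] herm_sym[of y "v i"] by simp
          then show "herm (v i) (B *v u i) = 0" by (simp add: Bx g_def herm_scale_right)
        qed
        have Qx0: "Q x0 = 0" by (simp add: Q_def hx0)
        have AB: "bj_orth A B" by (rule orth) (simp add: Bx g_def Qx0)
        have nBA: "\<not> bj_orth B A"
        proof (rule not_orth[where Q = Q])
          fix x
          show "B *v Q x = B *v x"
          proof -
            have "Q (Q x) = Q x" by (simp add: Q_def hQ[unfolded Q_def])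
            then show ?thesis by (simp add: Bx g_def)
          qed
          have "herm (Q x) (x - Q x) = 0"
            using herm_sym[of x0 x]
            by (simp add: Q_def herm_diff_left herm_scale_right herm_diff_right herm_scale_left hx0
                algebra_simps)
          then have "(norm (Q x + (x - Q x)))^2 = (norm (Q x))^2 + (norm (x - Q x))^2" by (rule pythag)
          then show "(norm (Q x))^2 + (norm (x - Q x))^2 = (norm x)^2" by simp
          show "(B *v x) \<bullet> (A *v Q x) \<ge> (norm (B *v x))^2"
          proof -
            define c where "c = herm y (A *v Q x)"
            have "(B *v x) \<bullet> (A *v Q x) = (cmod c)^2"
              by (simp add: Bx g_def inner_herm herm_scale_left c_def[symmetric] cnj_mult_self)
            moreover have "(norm (B *v x))^2 = (cmod c)^2"
              by (simp add: Bx g_def norm_scale_vec ny c_def)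
            ultimately show ?thesis by simp
          qed
        next
          show "B \<noteq> 0"
          proof
            assume "B = 0"
            then have "g x1 = 0" using Bx[of x1] by simp
            then show False using ya ny by (auto simp: g_def)
          qed
        qed
        show ?thesis using inV AB nBA by blast
      next
        case False
        then have AQ: "A *v Q x \<in> vec.span S" for x by blast
        define G where "G = insert w ((\<lambda>g. g - (herm w g / herm w (v j)) *s v j) ` (S - {v j}))"
        have vjS: "v j \<in> S" using j by (simp add: S_def)
        have "rank A \<le> card G"
        proof (rule rank_le)
          show "finite G" using fS by (simp add: G_def)
          fix l :: 'n
          let ?e = "axis l (1::complex)"
          have "herm w (A *v Q ?e) = 0" by (simp add: st hQ)
          then have "A *v Q ?e \<in> vec.span ((\<lambda>g. g - (herm w g / herm w (v j)) *s v j) ` (S - {v j}))"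
            by (rule span_perp[OF AQ fS vjS wvj])
          then have a1: "A *v Q ?e \<in> vec.span G" by (rule vec.span_mono[THEN subsetD, rotated]) (auto simp: G_def)
          have a2: "herm x0 ?e *s w \<in> vec.span G" by (intro vec.span_scale vec.span_base) (simp add: G_def)
          have "A *v ?e = A *v Q ?e + herm x0 ?e *s w"
            by (simp add: Q_def matrix_vector_mult_diff_distrib mv_scale w_def)
          then show "A *v ?e \<in> vec.span G" using a1 a2 by (simp add: vec.span_add)
        qed
        also have "\<dots> \<le> Suc (card (S - {v j}))"
        proof -
          let ?F = "(\<lambda>g. g - (herm w g / herm w (v j)) *s v j) ` (S - {v j})"
          have "card G \<le> Suc (card ?F)" unfolding G_def using fS by (simp add: card_insert_if)
          moreover have "card ?F \<le> card (S - {v j})" using fS by (intro card_image_le) simp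
          ultimately show ?thesis by simp
        qed
        also have "\<dots> \<le> k"
        proof -
          have "card S \<le> k" unfolding S_def using card_image_le[of "{1..k}" v] by simp
          moreover have "card (S - {v j}) = card S - 1" using vjS fS by simp
          moreover have "card S \<ge> 1" using vjS fS by (metis card_0_eq empty_iff less_one not_le)
          ultimately show ?thesis by simp
        qed
        finally show ?thesis using rk by simp
      qed
    qed
  qed
qed

theorem lemma3p3:
  fixes v u :: "nat \<Rightarrow> complex^'n" and k :: nat and A :: "complex^'n^'n"
  assumes "CARD('n) \<ge> 2"
    and "k \<le> CARD('n) - 1"
    and "\<And>i. i \<in> {1..k} \<Longrightarrow> norm (v i) = 1"
    and "\<And>i. i \<in> {1..k} \<Longrightarrow> norm (u i) = 1"
  defines "V \<equiv> {X :: (complex^'n^'n). \<forall>i\<in>{1..k}. sesq (v i) X (u i) = 0}"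
  shows "(A \<in> V \<and> rank A > k \<longrightarrow> \<not> left_symmetric_rel V A)
         \<and> \<not> (\<exists>B\<in>V. invertible B \<and> left_symmetric_rel V B)"
proof -
  have sesqV: "X \<in> V \<longleftrightarrow> (\<forall>i\<in>{1..k}. herm (v i) (X *v u i) = 0)" for X
    by (simp add: V_def sesq_herm)
  have P1: "\<not> left_symmetric_rel V A'" if AV: "A' \<in> V" and rk: "rank A' > k" for A'
  proof -
    have AV': "\<And>i. i \<in> {1..k} \<Longrightarrow> herm (v i) (A' *v u i) = 0" using AV sesqV by blast
    obtain B where BV: "\<forall>i\<in>{1..k}. herm (v i) (B *v u i) = 0" and AB: "bj_orth A' B"
      and BA: "\<not> bj_orth B A'"
      using main1[where v=v and u=u and k=k and A=A', OF assms(1) AV' rk] by blast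
    have "B \<in> V" using BV sesqV by blast
    then show ?thesis using AB BA unfolding left_symmetric_rel_def by blast
  qed
  show ?thesis
  proof
    show "A \<in> V \<and> rank A > k \<longrightarrow> \<not> left_symmetric_rel V A" using P1 by blast
    show "\<not> (\<exists>B\<in>V. invertible B \<and> left_symmetric_rel V B)"
    proof
      assume "\<exists>B\<in>V. invertible B \<and> left_symmetric_rel V B"
      then obtain B where BV: "B \<in> V" and inv: "invertible B" and ls: "left_symmetric_rel V B"
        by blast
      have "rank B = CARD('n)" by (rule rank_invertible[OF inv])
      then have "rank B > k" using assms(1,2) by simp
      then show False using P1[OF BV] ls by blast
    qed
  qed
qed

end
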